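(* Let $n\geq 2$ be an integer and $k\in\{1,\ldots,n-1\}$. Let $a_1,\ldots,a_n$ and $b_1,\ldots,b_{n-k}$ be positive real numbers such that $\max_{1\leq i\leq n}a_i\leq \min_{1\leq j\leq n-k}b_j$ and $\sum_{i=1}^{n}a_i=\sum_{j=1}^{n-k}b_j$. Then $$\sum_{i=1}^{n}a_i^2<\sum_{j=1}^{n-k}b_j^2.$$ *)

theory Defs
  imports Complex_Main
begin

end

theory Submission
  imports Defs
begin

theorem lemma2p1:
  fixes n k :: nat and a b :: "nat \<Rightarrow> real"
  assumes "n \<ge> 2" and "1 \<le> k" and "k \<le> n - 1"
    and "\<And>i. i \<in> {1..n} \<Longrightarrow> a i > 0"
    and "\<And>j. j \<in> {1..n-k} \<Longrightarrow> b j > 0"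
    and "(MAX i\<in>{1..n}. a i) \<le> (MIN j\<in>{1..n-k}. b j)"
    and "(\<Sum>i=1..n. a i) = (\<Sum>j=1..n-k. b j)"
  shows "(\<Sum>i=1..n. (a i)^2) < (\<Sum>j=1..n-k. (b j)^2)"
proof (rule ccontr)
  assume H: "\<not> ?thesis"
  define M where "M = (MAX i\<in>{1..n}. a i)"
  define m where "m = (MIN j\<in>{1..n-k}. b j)"
  define S where "S = (\<Sum>i=1..n. a i)"
  have ne1: "{1..n} \<noteq> {}" and ne2: "{1..n-k} \<noteq> {}" using assms(1-3) by auto
  have aM: "a i \<le> M" if "i \<in> {1..n}" for i unfolding M_def using that by (intro Max_ge) auto
  have bm: "m \<le> b j" if "j \<in> {1..n-k}" for j unfolding m_def using that by (intro Min_le) auto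
  have Mm: "M \<le> m" using assms(6) M_def m_def by simp
  have Spos: "S > 0" unfolding S_def using assms(4) ne1 by (intro sum_pos) auto
  have Sb: "S = (\<Sum>j=1..n-k. b j)" using assms(7) S_def by simp
  have e1: "M * S - (\<Sum>i=1..n. (a i)^2) = (\<Sum>i=1..n. a i * (M - a i))"
    unfolding S_def by (simp add: sum_distrib_left sum_subtractf algebra_simps power2_eq_square)
  have e2: "(\<Sum>j=1..n-k. (b j)^2) - m * S = (\<Sum>j=1..n-k. b j * (b j - m))"
    unfolding Sb by (simp add: sum_distrib_left sum_subtractf algebra_simps power2_eq_square)
  have n1: "(\<Sum>i=1..n. a i * (M - a i)) \<ge> 0"
    using assms(4) aM by (intro sum_nonneg) (simp add: less_imp_le)
  have n2: "(\<Sum>j=1..n-k. b j * (b j - m)) \<ge> 0"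
    using assms(5) bm by (intro sum_nonneg) (simp add: less_imp_le)
  have "M * S \<le> m * S" using Mm Spos by simp
  hence z1: "(\<Sum>i=1..n. a i * (M - a i)) = 0" and z2: "(\<Sum>j=1..n-k. b j * (b j - m)) = 0"
    and eq: "M * S = m * S"
    using H e1 e2 n1 n2 by linarith+
  have aeq: "a i = M" if "i \<in> {1..n}" for i
  proof -
    have "a i * (M - a i) = 0"
      using z1 sum_nonneg_eq_0_iff[of "{1..n}" "\<lambda>i. a i * (M - a i)"] assms(4) aM that
      by (simp add: less_imp_le)
    thus ?thesis using assms(4)[OF that] by simp
  qed
  have beq: "b j = m" if "j \<in> {1..n-k}" for j
  proof -
    have "b j * (b j - m) = 0"
      using z2 sum_nonneg_eq_0_iff[of "{1..n-k}" "\<lambda>j. b j * (b j - m)"] assms(5) bm that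
      by (simp add: less_imp_le)
    thus ?thesis using assms(5)[OF that] by simp
  qed
  have "M = m" using eq Spos by simp
  have s1: "S = real n * M" unfolding S_def using aeq by simp
  have s2: "S = real (n - k) * M" unfolding Sb using beq \<open>M = m\<close> by simp
  have "M > 0" using aeq[of 1] assms(4)[of 1] assms(1) by simp
  hence "real n = real (n - k)" using s1 s2 by simp
  thus False using assms(1-3) by simp
qed

end
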